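(* Let $Y$ be a separable infinite-dimensional Hilbert space and let $U\in L(Y)$ be a unitary operator. For every $\varepsilon>0$ there exist a separable Hilbert space $X$, a diagonal operator $D_{\mathrm{diag}}\in L(X)$ with $\|D_{\mathrm{diag}}\|\le 1+\varepsilon$, and an isometry $V:Y\to X$ such that $V^*D_{\mathrm{diag}}V=U$.
   Context: An operator $D\in L(X)$ is diagonal if $X$ has an orthonormal basis consisting of eigenvectors of $D$. *)

theory Defs
  imports Complex_Main "HOL-Library.Countable_Set"
begin

text \<open>The inner product is conjugate-linear in the first and linear in the second argument.\<close>

record 'a hspace =
  hvecs  :: "'a set"
  hadd   :: "'a \<Rightarrow> 'a \<Rightarrow> 'a"
  hscale :: "complex \<Rightarrow> 'a \<Rightarrow> 'a"
  hzero  :: "'a"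
  hinner :: "'a \<Rightarrow> 'a \<Rightarrow> complex"

definition hsub :: "'a hspace \<Rightarrow> 'a \<Rightarrow> 'a \<Rightarrow> 'a" where
  "hsub H x y = hadd H x (hscale H (-1) y)"

definition hnorm :: "'a hspace \<Rightarrow> 'a \<Rightarrow> real" where
  "hnorm H x = sqrt (Re (hinner H x x))"

definition complex_inner_product_space :: "'a hspace \<Rightarrow> bool" where
  "complex_inner_product_space H \<longleftrightarrow>
     hzero H \<in> hvecs H \<and>
     (\<forall>x\<in>hvecs H. \<forall>y\<in>hvecs H. hadd H x y \<in> hvecs H) \<and>
     (\<forall>c. \<forall>x\<in>hvecs H. hscale H c x \<in> hvecs H) \<and>
     (\<forall>x\<in>hvecs H. \<forall>y\<in>hvecs H. \<forall>z\<in>hvecs H. hadd H (hadd H x y) z = hadd H x (hadd H y z)) \<and>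
     (\<forall>x\<in>hvecs H. \<forall>y\<in>hvecs H. hadd H x y = hadd H y x) \<and>
     (\<forall>x\<in>hvecs H. hadd H (hzero H) x = x) \<and>
     (\<forall>x\<in>hvecs H. \<exists>y\<in>hvecs H. hadd H x y = hzero H) \<and>
     (\<forall>a b. \<forall>x\<in>hvecs H. hscale H a (hscale H b x) = hscale H (a * b) x) \<and>
     (\<forall>x\<in>hvecs H. hscale H 1 x = x) \<and>
     (\<forall>a b. \<forall>x\<in>hvecs H. hscale H (a + b) x = hadd H (hscale H a x) (hscale H b x)) \<and>
     (\<forall>a. \<forall>x\<in>hvecs H. \<forall>y\<in>hvecs H. hscale H a (hadd H x y) = hadd H (hscale H a x) (hscale H a y)) \<and>
     (\<forall>x\<in>hvecs H. \<forall>y\<in>hvecs H. hinner H x y = cnj (hinner H y x)) \<and>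
     (\<forall>x\<in>hvecs H. \<forall>y\<in>hvecs H. \<forall>z\<in>hvecs H. hinner H x (hadd H y z) = hinner H x y + hinner H x z) \<and>
     (\<forall>c. \<forall>x\<in>hvecs H. \<forall>y\<in>hvecs H. hinner H x (hscale H c y) = c * hinner H x y) \<and>
     (\<forall>x\<in>hvecs H. 0 \<le> Re (hinner H x x)) \<and>
     (\<forall>x\<in>hvecs H. hinner H x x = 0 \<longrightarrow> x = hzero H)"

definition hilbert_space :: "'a hspace \<Rightarrow> bool" where
  "hilbert_space H \<longleftrightarrow> complex_inner_product_space H \<and>
     (\<forall>s. (\<forall>n. s n \<in> hvecs H) \<and>
          (\<forall>e>0. \<exists>N. \<forall>m\<ge>N. \<forall>n\<ge>N. hnorm H (hsub H (s m) (s n)) < e)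
        \<longrightarrow> (\<exists>x\<in>hvecs H. (\<lambda>n. hnorm H (hsub H (s n) x)) \<longlonglongrightarrow> 0))"

definition separable_hspace :: "'a hspace \<Rightarrow> bool" where
  "separable_hspace H \<longleftrightarrow> (\<exists>D \<subseteq> hvecs H. countable D \<and>
     (\<forall>x\<in>hvecs H. \<forall>e>0. \<exists>d\<in>D. hnorm H (hsub H x d) < e))"

fun hlsum :: "'a hspace \<Rightarrow> 'a list \<Rightarrow> 'a" where
  "hlsum H [] = hzero H"
| "hlsum H (x # xs) = hadd H x (hlsum H xs)"

definition finite_dimensional :: "'a hspace \<Rightarrow> bool" where
  "finite_dimensional H \<longleftrightarrow> (\<exists>fs. set fs \<subseteq> hvecs H \<and>
     (\<forall>x\<in>hvecs H. \<exists>cs. length cs = length fs \<and> x = hlsum H (map2 (hscale H) cs fs)))"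

definition infinite_dimensional :: "'a hspace \<Rightarrow> bool" where
  "infinite_dimensional H \<longleftrightarrow> \<not> finite_dimensional H"

definition bounded_linear_op :: "'a hspace \<Rightarrow> 'b hspace \<Rightarrow> ('a \<Rightarrow> 'b) \<Rightarrow> bool" where
  "bounded_linear_op H1 H2 T \<longleftrightarrow>
     (\<forall>x\<in>hvecs H1. T x \<in> hvecs H2) \<and>
     (\<forall>x\<in>hvecs H1. \<forall>y\<in>hvecs H1. T (hadd H1 x y) = hadd H2 (T x) (T y)) \<and>
     (\<forall>c. \<forall>x\<in>hvecs H1. T (hscale H1 c x) = hscale H2 c (T x)) \<and>
     (\<exists>K. \<forall>x\<in>hvecs H1. hnorm H2 (T x) \<le> K * hnorm H1 x)"

definition is_adjoint :: "'a hspace \<Rightarrow> 'b hspace \<Rightarrow> ('a \<Rightarrow> 'b) \<Rightarrow> ('b \<Rightarrow> 'a) \<Rightarrow> bool" where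
  "is_adjoint H1 H2 T S \<longleftrightarrow>
     (\<forall>y\<in>hvecs H2. S y \<in> hvecs H1) \<and>
     (\<forall>x\<in>hvecs H1. \<forall>y\<in>hvecs H2. hinner H2 (T x) y = hinner H1 x (S y))"

definition unitary :: "'a hspace \<Rightarrow> ('a \<Rightarrow> 'a) \<Rightarrow> bool" where
  "unitary H U \<longleftrightarrow> bounded_linear_op H H U \<and>
     (\<exists>S. is_adjoint H H U S \<and> (\<forall>x\<in>hvecs H. S (U x) = x \<and> U (S x) = x))"

definition isometry :: "'a hspace \<Rightarrow> 'b hspace \<Rightarrow> ('a \<Rightarrow> 'b) \<Rightarrow> bool" where
  "isometry H1 H2 V \<longleftrightarrow> bounded_linear_op H1 H2 V \<and>
     (\<forall>x\<in>hvecs H1. hnorm H2 (V x) = hnorm H1 x)"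

definition orthonormal_basis :: "'a hspace \<Rightarrow> 'a set \<Rightarrow> bool" where
  "orthonormal_basis H B \<longleftrightarrow> B \<subseteq> hvecs H \<and>
     (\<forall>b\<in>B. hinner H b b = 1) \<and>
     (\<forall>b\<in>B. \<forall>b'\<in>B. b \<noteq> b' \<longrightarrow> hinner H b b' = 0) \<and>
     (\<forall>x\<in>hvecs H. (\<forall>b\<in>B. hinner H b x = 0) \<longrightarrow> x = hzero H)"

definition eigenvector :: "'a hspace \<Rightarrow> ('a \<Rightarrow> 'a) \<Rightarrow> 'a \<Rightarrow> bool" where
  "eigenvector H D v \<longleftrightarrow> v \<in> hvecs H \<and> v \<noteq> hzero H \<and> (\<exists>c. D v = hscale H c v)"

definition diagonal :: "'a hspace \<Rightarrow> ('a \<Rightarrow> 'a) \<Rightarrow> bool" where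
  "diagonal H D \<longleftrightarrow> bounded_linear_op H H D \<and>
     (\<exists>B. orthonormal_basis H B \<and> (\<forall>b\<in>B. eigenvector H D b))"

end

theory Submission
  imports Defs "HOL-Library.Countable_Set"
begin


locale cips =
  fixes H :: "'a hspace"
  assumes cips: "complex_inner_product_space H"
begin

abbreviation "VV \<equiv> hvecs H"
abbreviation "ad \<equiv> hadd H"
abbreviation "sc \<equiv> hscale H"
abbreviation "z0 \<equiv> hzero H"
abbreviation "ip \<equiv> hinner H"

lemma zero_in[simp]: "hzero H \<in> hvecs H" using cips unfolding complex_inner_product_space_def
  by (elim conjE) assumption
lemma ax_add: "\<forall>x\<in>hvecs H. \<forall>y\<in>hvecs H. hadd H x y \<in> hvecs H" using cips unfolding complex_inner_product_space_def
  by (elim conjE) assumption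
lemma add_in[simp]: "x \<in> VV \<Longrightarrow> y \<in> VV \<Longrightarrow> ad x y \<in> VV" using ax_add by blast
lemma ax_scale: "\<forall>c. \<forall>x\<in>hvecs H. hscale H c x \<in> hvecs H" using cips unfolding complex_inner_product_space_def
  by (elim conjE) assumption
lemma scale_in[simp]: "x \<in> VV \<Longrightarrow> sc c x \<in> VV" using ax_scale by blast
lemma ax_assoc: "\<forall>x\<in>hvecs H. \<forall>y\<in>hvecs H. \<forall>z\<in>hvecs H. hadd H (hadd H x y) z = hadd H x (hadd H y z)" using cips unfolding complex_inner_product_space_def
  by (elim conjE) assumption
lemma add_assoc: "x \<in> VV \<Longrightarrow> y \<in> VV \<Longrightarrow> z \<in> VV \<Longrightarrow> ad (ad x y) z = ad x (ad y z)" using ax_assoc by blast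
lemma ax_comm: "\<forall>x\<in>hvecs H. \<forall>y\<in>hvecs H. hadd H x y = hadd H y x" using cips unfolding complex_inner_product_space_def
  by (elim conjE) assumption
lemma add_comm: "x \<in> VV \<Longrightarrow> y \<in> VV \<Longrightarrow> ad x y = ad y x" using ax_comm by blast
lemma ax_zadd: "\<forall>x\<in>hvecs H. hadd H (hzero H) x = x" using cips unfolding complex_inner_product_space_def
  by (elim conjE) assumption
lemma zero_add[simp]: "x \<in> VV \<Longrightarrow> ad z0 x = x" using ax_zadd by blast
lemma ax_inv: "\<forall>x\<in>hvecs H. \<exists>y\<in>hvecs H. hadd H x y = hzero H" using cips unfolding complex_inner_product_space_def
  by (elim conjE) assumption
lemma ax_ss: "\<forall>a b. \<forall>x\<in>hvecs H. hscale H a (hscale H b x) = hscale H (a * b) x" using cips unfolding complex_inner_product_space_def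
  by (elim conjE) assumption
lemma scale_scale[simp]: "x \<in> VV \<Longrightarrow> sc a (sc b x) = sc (a*b) x" using ax_ss by blast
lemma ax_one: "\<forall>x\<in>hvecs H. hscale H 1 x = x" using cips unfolding complex_inner_product_space_def
  by (elim conjE) assumption
lemma scale_one[simp]: "x \<in> VV \<Longrightarrow> sc 1 x = x" using ax_one by blast
lemma ax_sal: "\<forall>a b. \<forall>x\<in>hvecs H. hscale H (a + b) x = hadd H (hscale H a x) (hscale H b x)" using cips unfolding complex_inner_product_space_def
  by (elim conjE) assumption
lemma scale_add_left: "x \<in> VV \<Longrightarrow> sc (a+b) x = ad (sc a x) (sc b x)" using ax_sal by blast
lemma ax_sar: "\<forall>a. \<forall>x\<in>hvecs H. \<forall>y\<in>hvecs H. hscale H a (hadd H x y) = hadd H (hscale H a x) (hscale H a y)" using cips unfolding complex_inner_product_space_def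
  by (elim conjE) assumption
lemma scale_add_right: "x \<in> VV \<Longrightarrow> y \<in> VV \<Longrightarrow> sc a (ad x y) = ad (sc a x) (sc a y)" using ax_sar by blast
lemma ax_sym: "\<forall>x\<in>hvecs H. \<forall>y\<in>hvecs H. hinner H x y = cnj (hinner H y x)" using cips unfolding complex_inner_product_space_def
  by (elim conjE) assumption
lemma inner_sym: "x \<in> VV \<Longrightarrow> y \<in> VV \<Longrightarrow> ip x y = cnj (ip y x)" using ax_sym by blast
lemma ax_iar: "\<forall>x\<in>hvecs H. \<forall>y\<in>hvecs H. \<forall>z\<in>hvecs H. hinner H x (hadd H y z) = hinner H x y + hinner H x z" using cips unfolding complex_inner_product_space_def
  by (elim conjE) assumption
lemma inner_add_right[simp]: "x \<in> VV \<Longrightarrow> y \<in> VV \<Longrightarrow> z \<in> VV \<Longrightarrow> ip x (ad y z) = ip x y + ip x z" using ax_iar by blast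
lemma ax_isr: "\<forall>c. \<forall>x\<in>hvecs H. \<forall>y\<in>hvecs H. hinner H x (hscale H c y) = c * hinner H x y" using cips unfolding complex_inner_product_space_def
  by (elim conjE) assumption
lemma inner_scale_right[simp]: "x \<in> VV \<Longrightarrow> y \<in> VV \<Longrightarrow> ip x (sc c y) = c * ip x y" using ax_isr by blast
lemma ax_nn: "\<forall>x\<in>hvecs H. 0 \<le> Re (hinner H x x)" using cips unfolding complex_inner_product_space_def
  by (elim conjE) assumption
lemma inner_nonneg: "x \<in> VV \<Longrightarrow> 0 \<le> Re (ip x x)" using ax_nn by blast
lemma ax_def: "\<forall>x\<in>hvecs H. hinner H x x = 0 \<longrightarrow> x = hzero H" using cips unfolding complex_inner_product_space_def
  by (elim conjE) assumption
lemma inner_eq0: "x \<in> VV \<Longrightarrow> ip x x = 0 \<Longrightarrow> x = z0" using ax_def by blast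

lemma inner_add_left[simp]: "x \<in> VV \<Longrightarrow> y \<in> VV \<Longrightarrow> z \<in> VV \<Longrightarrow> ip (ad x y) z = ip x z + ip y z"
  by (subst inner_sym, auto) (metis complex_cnj_add inner_sym)
lemma inner_scale_left[simp]: "x \<in> VV \<Longrightarrow> y \<in> VV \<Longrightarrow> ip (sc c x) y = cnj c * ip x y"
  by (subst inner_sym, auto) (metis complex_cnj_mult complex_cnj_cnj inner_sym)
lemma inner_zero_right[simp]: "x \<in> VV \<Longrightarrow> ip x z0 = 0"
proof -
  assume x: "x \<in> VV"
  have "ip x (ad z0 z0) = ip x z0 + ip x z0" by (rule inner_add_right[OF x zero_in zero_in])
  then show ?thesis using zero_add[OF zero_in] by simp
qed
lemma inner_zero_left[simp]: "x \<in> VV \<Longrightarrow> ip z0 x = 0"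
  by (subst inner_sym) auto
lemma inner_real: "x \<in> VV \<Longrightarrow> Im (ip x x) = 0"
  using inner_sym[of x x] by (metis cnj.simps(2) neg_equal_zero)
lemma inner_cor: "x \<in> VV \<Longrightarrow> ip x x = complex_of_real (Re (ip x x))"
  using inner_real complex_eq_iff by force
lemma scale_zero[simp]: "x \<in> VV \<Longrightarrow> sc 0 x = z0"
  by (rule inner_eq0) auto
lemma add_zero[simp]: "x \<in> VV \<Longrightarrow> ad x z0 = x"
  by (subst add_comm) auto
lemma add_neg: "x \<in> VV \<Longrightarrow> ad x (sc (-1) x) = z0"
proof -
  assume x: "x \<in> VV"
  have "ad x (sc (-1) x) = ad (sc 1 x) (sc (-1) x)" using x by simp
  also have "\<dots> = sc (1 + -1) x" by (rule scale_add_left[symmetric, OF x])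
  finally show ?thesis using x by simp
qed
lemma hsub_in[simp]: "x \<in> VV \<Longrightarrow> y \<in> VV \<Longrightarrow> hsub H x y \<in> VV" by (simp add: hsub_def)
lemma inner_sub_right[simp]: "x \<in> VV \<Longrightarrow> y \<in> VV \<Longrightarrow> z \<in> VV \<Longrightarrow> ip x (hsub H y z) = ip x y - ip x z"
  by (simp add: hsub_def)
lemma inner_sub_left[simp]: "x \<in> VV \<Longrightarrow> y \<in> VV \<Longrightarrow> z \<in> VV \<Longrightarrow> ip (hsub H y z) x = ip y x - ip z x"
  by (simp add: hsub_def)
lemma sub_zero_eq: "x \<in> VV \<Longrightarrow> y \<in> VV \<Longrightarrow> hsub H x y = z0 \<Longrightarrow> x = y"
proof -
  assume x: "x \<in> VV" and y: "y \<in> VV" and h: "hsub H x y = z0"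
  have "x = ad x z0" using x by simp
  also have "\<dots> = ad x (ad (sc (-1) y) y)"
    using add_neg[OF y] add_comm[of y "sc (-1) y"] y by simp
  also have "\<dots> = ad (hsub H x y) y" using x y by (simp add: hsub_def add_assoc)
  finally show ?thesis using h y by simp
qed
lemma eq_by_inner: "a \<in> VV \<Longrightarrow> b \<in> VV \<Longrightarrow> (\<And>z. z \<in> VV \<Longrightarrow> ip z a = ip z b) \<Longrightarrow> a = b"
proof -
  assume a: "a \<in> VV" and b: "b \<in> VV" and h: "\<And>z. z \<in> VV \<Longrightarrow> ip z a = ip z b"
  have "ip (hsub H a b) (hsub H a b) = 0" using a b h[of "hsub H a b"] by simp
  then have "hsub H a b = z0" using a b by (intro inner_eq0) auto
  then show ?thesis using a b sub_zero_eq by blast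
qed

lemma hnorm_sq: assumes x: "x \<in> VV" shows "(hnorm H x)^2 = Re (ip x x)"
proof -
  have "0 \<le> Re (ip x x)" by (rule inner_nonneg[OF x])
  then show ?thesis unfolding hnorm_def by (rule real_sqrt_pow2)
qed
lemma hnorm_nonneg: assumes x: "x \<in> VV" shows "0 \<le> hnorm H x"
  using inner_nonneg[OF x] by (simp add: hnorm_def)

end



fun hsumn :: "'a hspace \<Rightarrow> (nat \<Rightarrow> 'a) \<Rightarrow> nat \<Rightarrow> 'a" where
  "hsumn H f 0 = hzero H"
| "hsumn H f (Suc n) = hadd H (hsumn H f n) (f n)"

context cips begin

lemma hsumn_in[simp]: "(\<And>i. i < n \<Longrightarrow> f i \<in> VV) \<Longrightarrow> hsumn H f n \<in> VV"
  by (induction n) auto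

lemma inner_hsumn_right:
  "z \<in> VV \<Longrightarrow> (\<And>i. i < n \<Longrightarrow> f i \<in> VV) \<Longrightarrow> ip z (hsumn H f n) = (\<Sum>i<n. ip z (f i))"
  by (induction n) auto

lemma inner_hsumn_left:
  "z \<in> VV \<Longrightarrow> (\<And>i. i < n \<Longrightarrow> f i \<in> VV) \<Longrightarrow> ip (hsumn H f n) z = (\<Sum>i<n. ip (f i) z)"
  by (induction n) auto

lemma exists_onb: "\<exists>B. orthonormal_basis H B"
proof -
  define A where "A = {B. B \<subseteq> VV \<and> (\<forall>b\<in>B. ip b b = 1) \<and> (\<forall>b\<in>B. \<forall>b'\<in>B. b \<noteq> b' \<longrightarrow> ip b b' = 0)}"
  have "\<forall>C\<in>chains A. \<Union>C \<in> A"
  proof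
    fix C assume C: "C \<in> chains A"
    have sub: "C \<subseteq> A" using chainsD2[OF C] .
    show "\<Union>C \<in> A" unfolding A_def
    proof (intro CollectI conjI ballI impI)
      show "\<Union>C \<subseteq> VV" using sub unfolding A_def by blast
      fix b assume "b \<in> \<Union>C" then show "ip b b = 1" using sub unfolding A_def by blast
    next
      fix b b' assume b: "b \<in> \<Union>C" and b': "b' \<in> \<Union>C" and ne: "b \<noteq> b'"
      obtain X where X: "X \<in> C" "b \<in> X" using b by blast
      obtain X' where X': "X' \<in> C" "b' \<in> X'" using b' by blast
      have "X \<subseteq> X' \<or> X' \<subseteq> X" using chainsD[OF C X(1) X'(1)] .
      then obtain Y where "Y \<in> C" "b \<in> Y" "b' \<in> Y" using X X' by blast
      then show "ip b b' = 0" using sub ne unfolding A_def by blast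
    qed
  qed
  from Zorn_Lemma[OF this] obtain M where M: "M \<in> A" and max: "\<forall>X\<in>A. M \<subseteq> X \<longrightarrow> X = M" by blast
  have Mc: "M \<subseteq> VV \<and> (\<forall>b\<in>M. ip b b = 1) \<and> (\<forall>b\<in>M. \<forall>b'\<in>M. b \<noteq> b' \<longrightarrow> ip b b' = 0)"
    using M unfolding A_def by (rule CollectD)
  from Mc have MV: "M \<subseteq> VV" by (rule conjunct1)
  from Mc have M1: "\<forall>b\<in>M. ip b b = 1" by (metis conjunct1 conjunct2)
  from Mc have M2: "\<forall>b\<in>M. \<forall>b'\<in>M. b \<noteq> b' \<longrightarrow> ip b b' = 0" by (metis conjunct2)
  have tot: "x = z0" if x: "x \<in> VV" and orth: "\<forall>b\<in>M. ip b x = 0" for x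
  proof (rule ccontr)
    assume nz: "x \<noteq> z0"
    define r where "r = Re (ip x x)"
    have "ip x x \<noteq> 0" using nz inner_eq0 x by blast
    then have "r \<noteq> 0" using inner_cor[OF x] unfolding r_def by (metis of_real_0)
    then have rpos: "r > 0" using inner_nonneg[OF x] unfolding r_def by linarith
    define c where "c = complex_of_real (1 / sqrt r)"
    define u where "u = sc c x"
    have u: "u \<in> VV" using x unfolding u_def by simp
    have "ip u u = cnj c * c * ip x x" unfolding u_def using x by simp
    also have "\<dots> = complex_of_real ((1 / sqrt r) * (1 / sqrt r) * r)"
    proof -
      have "ip x x = complex_of_real r" unfolding r_def by (rule inner_cor[OF x])
      then show ?thesis unfolding c_def by (simp only: complex_cnj_complex_of_real of_real_mult)
    qed
    also have "\<dots> = 1" using rpos by (simp add: field_simps)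
    finally have uu: "ip u u = 1" .
    have bu: "ip b u = 0" if "b \<in> M" for b using orth that MV x unfolding u_def by auto
    have ub: "ip u b = 0" if "b \<in> M" for b using bu[OF that] inner_sym[OF u, of b] MV that by auto
    have unot: "u \<notin> M" using bu uu by force
    have "insert u M \<in> A" unfolding A_def using MV M1 M2 u uu bu ub by auto
    then have "insert u M = M" using max by blast
    then show False using unot by blast
  qed
  have "orthonormal_basis H M" unfolding orthonormal_basis_def
  proof (intro conjI ballI impI)
    show "M \<subseteq> VV" by (rule MV)
  next
    fix b assume "b \<in> M" then show "ip b b = 1" using M1 by blast
  next
    fix b b' assume "b \<in> M" "b' \<in> M" "b \<noteq> b'" then show "ip b b' = 0" using M2 by blast
  next
    fix x assume "x \<in> VV" "\<forall>b\<in>M. ip b x = 0" then show "x = z0" using tot by blast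
  qed
  then show ?thesis by blast
qed

lemma sep_inj:
  assumes sep: "separable_hspace H"
  shows "\<exists>\<iota> :: 'a \<Rightarrow> nat \<Rightarrow> complex. inj_on \<iota> VV"
proof -
  obtain D where D: "D \<subseteq> VV" "countable D" and dense: "\<forall>x\<in>VV. \<forall>e>0. \<exists>d\<in>D. hnorm H (hsub H x d) < e"
    using sep unfolding separable_hspace_def by blast
  have Dne: "D \<noteq> {}"
  proof -
    from dense zero_in have "\<exists>d\<in>D. hnorm H (hsub H z0 d) < 1" by auto
    then show ?thesis by blast
  qed
  define d where "d = from_nat_into D"
  have rd: "range d = D" unfolding d_def using Dne D by simp
  define \<iota> where "\<iota> = (\<lambda>y n. ip (d n) y)"
  have "inj_on \<iota> VV"
  proof (rule inj_onI)
    fix y y' assume y: "y \<in> VV" and y': "y' \<in> VV" and eq: "\<iota> y = \<iota> y'"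
    define w where "w = hsub H y y'"
    have w: "w \<in> VV" unfolding w_def using y y' by simp
    have orth: "ip a w = 0" if a: "a \<in> D" for a
    proof -
      obtain n where "a = d n" using a rd by blast
      then have "ip a y = ip a y'" using fun_cong[OF eq, of n] unfolding \<iota>_def by simp
      then show ?thesis unfolding w_def using y y' a D by auto
    qed
    have small: "hnorm H w < e" if e: "e > 0" for e
    proof -
      obtain a where a: "a \<in> D" and lt: "hnorm H (hsub H w a) < e" using dense w e by blast
      have aV: "a \<in> VV" using a D by blast
      have wa: "ip w a = 0" using orth[OF a] inner_sym[OF w aV] by simp
      have "(hnorm H (hsub H w a))^2 = Re (ip (hsub H w a) (hsub H w a))" using hnorm_sq w aV by simp
      also have "\<dots> = Re (ip w w) + Re (ip a a)" using w aV orth[OF a] wa by simp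
      also have "\<dots> \<ge> Re (ip w w)" using inner_nonneg[OF aV] by simp
      finally have "(hnorm H w)^2 \<le> (hnorm H (hsub H w a))^2" using hnorm_sq[OF w] by simp
      then have "hnorm H w \<le> hnorm H (hsub H w a)"
        using hnorm_nonneg[OF hsub_in[OF w aV]] by (rule power2_le_imp_le)
      then show ?thesis using lt by simp
    qed
    have "hnorm H w \<le> 0"
    proof (rule ccontr)
      assume "\<not> hnorm H w \<le> 0"
      then show False using small[of "hnorm H w"] by simp
    qed
    then have "hnorm H w = 0" using hnorm_nonneg[OF w] by simp
    then have "Re (ip w w) = 0" using hnorm_sq[OF w] by simp
    then have "ip w w = 0" using inner_cor[OF w] by (metis of_real_0)
    then have "w = z0" using inner_eq0 w by blast
    then show "y = y'" using sub_zero_eq y y' unfolding w_def by blast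
  qed
  then show ?thesis by blast
qed

end



definition Zsp :: "'a hspace \<Rightarrow> nat \<Rightarrow> (nat \<Rightarrow> 'a) hspace" where
  "Zsp H N = \<lparr>hvecs = {x. (\<forall>j<N. x j \<in> hvecs H) \<and> (\<forall>j. N \<le> j \<longrightarrow> x j = hzero H)},
     hadd = (\<lambda>x y j. if j < N then hadd H (x j) (y j) else hzero H),
     hscale = (\<lambda>c x j. if j < N then hscale H c (x j) else hzero H),
     hzero = (\<lambda>j. hzero H),
     hinner = (\<lambda>x y. \<Sum>j<N. hinner H (x j) (y j))\<rparr>"

lemma Zsp_simps:
  "hvecs (Zsp H N) = {x. (\<forall>j<N. x j \<in> hvecs H) \<and> (\<forall>j. N \<le> j \<longrightarrow> x j = hzero H)}"
  "hadd (Zsp H N) x y = (\<lambda>j. if j < N then hadd H (x j) (y j) else hzero H)"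
  "hscale (Zsp H N) c x = (\<lambda>j. if j < N then hscale H c (x j) else hzero H)"
  "hzero (Zsp H N) = (\<lambda>j. hzero H)"
  "hinner (Zsp H N) x y = (\<Sum>j<N. hinner H (x j) (y j))"
  by (simp_all add: Zsp_def)

context cips begin

abbreviation "ZZ N \<equiv> Zsp H N"

lemma Zvec: "x \<in> hvecs (ZZ N) \<longleftrightarrow> (\<forall>j<N. x j \<in> VV) \<and> (\<forall>j. N \<le> j \<longrightarrow> x j = z0)"
  by (simp add: Zsp_simps)

lemma Zvec_comp: "x \<in> hvecs (ZZ N) \<Longrightarrow> j < N \<Longrightarrow> x j \<in> VV" by (simp add: Zvec)
lemma Zvec_out: "x \<in> hvecs (ZZ N) \<Longrightarrow> \<not> j < N \<Longrightarrow> x j = z0" by (simp add: Zvec)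

lemma Z_cips: "complex_inner_product_space (ZZ N)"
  unfolding complex_inner_product_space_def
proof (intro conjI ballI allI impI)
  show "hzero (ZZ N) \<in> hvecs (ZZ N)" by (simp add: Zsp_simps)
next
  fix x y assume "x \<in> hvecs (ZZ N)" "y \<in> hvecs (ZZ N)"
  then show "hadd (ZZ N) x y \<in> hvecs (ZZ N)" by (simp add: Zsp_simps)
next
  fix c x assume "x \<in> hvecs (ZZ N)"
  then show "hscale (ZZ N) c x \<in> hvecs (ZZ N)" by (simp add: Zsp_simps)
next
  fix x y z assume "x \<in> hvecs (ZZ N)" "y \<in> hvecs (ZZ N)" "z \<in> hvecs (ZZ N)"
  then show "hadd (ZZ N) (hadd (ZZ N) x y) z = hadd (ZZ N) x (hadd (ZZ N) y z)"
    by (auto simp: Zsp_simps add_assoc)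
next
  fix x y assume "x \<in> hvecs (ZZ N)" "y \<in> hvecs (ZZ N)"
  then show "hadd (ZZ N) x y = hadd (ZZ N) y x" by (auto simp: Zsp_simps add_comm)
next
  fix x assume x: "x \<in> hvecs (ZZ N)"
  show "hadd (ZZ N) (hzero (ZZ N)) x = x"
  proof
    fix j show "hadd (ZZ N) (hzero (ZZ N)) x j = x j"
      using x by (cases "j < N") (auto simp: Zsp_simps)
  qed
next
  fix x assume x: "x \<in> hvecs (ZZ N)"
  show "\<exists>y\<in>hvecs (ZZ N). hadd (ZZ N) x y = hzero (ZZ N)"
  proof (rule bexI[of _ "hscale (ZZ N) (-1) x"])
    show "hscale (ZZ N) (-1) x \<in> hvecs (ZZ N)" using x by (simp add: Zsp_simps)
    show "hadd (ZZ N) x (hscale (ZZ N) (-1) x) = hzero (ZZ N)"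
      using x by (auto simp: Zsp_simps add_neg)
  qed
next
  fix a b x assume "x \<in> hvecs (ZZ N)"
  then show "hscale (ZZ N) a (hscale (ZZ N) b x) = hscale (ZZ N) (a * b) x" by (auto simp: Zsp_simps)
next
  fix x assume x: "x \<in> hvecs (ZZ N)"
  show "hscale (ZZ N) 1 x = x"
  proof
    fix j show "hscale (ZZ N) 1 x j = x j" using x by (cases "j < N") (auto simp: Zsp_simps)
  qed
next
  fix a b x assume "x \<in> hvecs (ZZ N)"
  then show "hscale (ZZ N) (a + b) x = hadd (ZZ N) (hscale (ZZ N) a x) (hscale (ZZ N) b x)"
    by (auto simp: Zsp_simps scale_add_left)
next
  fix a x y assume "x \<in> hvecs (ZZ N)" "y \<in> hvecs (ZZ N)"
  then show "hscale (ZZ N) a (hadd (ZZ N) x y) = hadd (ZZ N) (hscale (ZZ N) a x) (hscale (ZZ N) a y)"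
    by (auto simp: Zsp_simps scale_add_right)
next
  fix x y assume x: "x \<in> hvecs (ZZ N)" and y: "y \<in> hvecs (ZZ N)"
  have "(\<Sum>j<N. ip (x j) (y j)) = (\<Sum>j<N. cnj (ip (y j) (x j)))"
    by (rule sum.cong) (use x y in \<open>auto simp: Zvec intro: inner_sym\<close>)
  then show "hinner (ZZ N) x y = cnj (hinner (ZZ N) y x)" by (simp add: Zsp_simps)
next
  fix x y z assume x: "x \<in> hvecs (ZZ N)" and y: "y \<in> hvecs (ZZ N)" and z: "z \<in> hvecs (ZZ N)"
  have "(\<Sum>j<N. ip (x j) (hadd (ZZ N) y z j)) = (\<Sum>j<N. ip (x j) (y j) + ip (x j) (z j))"
    by (rule sum.cong) (use x y z in \<open>auto simp: Zvec Zsp_simps\<close>)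
  then show "hinner (ZZ N) x (hadd (ZZ N) y z) = hinner (ZZ N) x y + hinner (ZZ N) x z"
    by (simp add: Zsp_simps(5) sum.distrib)
next
  fix c x y assume x: "x \<in> hvecs (ZZ N)" and y: "y \<in> hvecs (ZZ N)"
  have "(\<Sum>j<N. ip (x j) (hscale (ZZ N) c y j)) = (\<Sum>j<N. c * ip (x j) (y j))"
    by (rule sum.cong) (use x y in \<open>auto simp: Zvec Zsp_simps\<close>)
  then show "hinner (ZZ N) x (hscale (ZZ N) c y) = c * hinner (ZZ N) x y"
    by (simp add: Zsp_simps(5) sum_distrib_left)
next
  fix x assume x: "x \<in> hvecs (ZZ N)"
  have "0 \<le> (\<Sum>j<N. Re (ip (x j) (x j)))" by (rule sum_nonneg) (use x in \<open>auto simp: Zvec intro: inner_nonneg\<close>)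
  then show "0 \<le> Re (hinner (ZZ N) x x)" by (simp add: Zsp_simps)
next
  fix x assume x: "x \<in> hvecs (ZZ N)" and h: "hinner (ZZ N) x x = 0"
  have "(\<Sum>j<N. Re (ip (x j) (x j))) = 0" using h by (simp add: Zsp_simps flip: Re_sum)
  then have "\<forall>j\<in>{..<N}. Re (ip (x j) (x j)) = 0"
    by (subst sum_nonneg_eq_0_iff[symmetric]) (use x in \<open>auto simp: Zvec intro: inner_nonneg\<close>)
  then have "\<forall>j<N. x j = z0" using x by (metis Zvec_comp inner_cor inner_eq0 lessThan_iff of_real_0)
  then show "x = hzero (ZZ N)" using x unfolding Zsp_simps(4)
    by (intro ext) (metis Zvec_out)
qed

end



context cips begin

lemma Zc: "cips (ZZ N)" using Z_cips by (simp add: cips_def)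

lemma Z_hsub_in: "x \<in> hvecs (ZZ N) \<Longrightarrow> y \<in> hvecs (ZZ N) \<Longrightarrow> hsub (ZZ N) x y \<in> hvecs (ZZ N)"
  by (rule cips.hsub_in[OF Zc])

lemma Z_hsub: "x \<in> hvecs (ZZ N) \<Longrightarrow> y \<in> hvecs (ZZ N) \<Longrightarrow>
   hsub (ZZ N) x y = (\<lambda>j. if j < N then hsub H (x j) (y j) else z0)"
  by (auto simp: hsub_def Zsp_simps)

lemma Z_hnorm: assumes x: "x \<in> hvecs (ZZ N)"
  shows "hnorm (ZZ N) x = sqrt (\<Sum>j<N. (hnorm H (x j))^2)"
proof -
  have "Re (hinner (ZZ N) x x) = (\<Sum>j<N. Re (ip (x j) (x j)))" by (simp add: Zsp_simps)
  also have "\<dots> = (\<Sum>j<N. (hnorm H (x j))^2)"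
    by (rule sum.cong) (use x in \<open>auto simp: Zvec hnorm_sq\<close>)
  finally show ?thesis unfolding hnorm_def by simp
qed

lemma Z_comp_le: assumes x: "x \<in> hvecs (ZZ N)" and j: "j < N"
  shows "hnorm H (x j) \<le> hnorm (ZZ N) x"
proof -
  have "(hnorm H (x j))^2 \<le> (\<Sum>j<N. (hnorm H (x j))^2)"
    by (rule member_le_sum[of j "{..<N}" "\<lambda>j. (hnorm H (x j))^2"]) (use j in auto)
  then have "sqrt ((hnorm H (x j))^2) \<le> sqrt (\<Sum>j<N. (hnorm H (x j))^2)" by (rule real_sqrt_le_mono)
  then show ?thesis using hnorm_nonneg[OF Zvec_comp[OF x j]] Z_hnorm[OF x] by simp
qed

lemma Z_hilbert: assumes hil: "hilbert_space H" shows "hilbert_space (ZZ N)"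
  unfolding hilbert_space_def
proof (intro conjI allI impI)
  show "complex_inner_product_space (ZZ N)" by (rule Z_cips)
  fix s :: "nat \<Rightarrow> nat \<Rightarrow> 'a" assume "(\<forall>n. s n \<in> hvecs (ZZ N)) \<and>
          (\<forall>e>0. \<exists>M. \<forall>m\<ge>M. \<forall>n\<ge>M. hnorm (ZZ N) (hsub (ZZ N) (s m) (s n)) < e)"
  then have sZ: "\<And>n. s n \<in> hvecs (ZZ N)" and cau: "\<forall>e>0. \<exists>M. \<forall>m\<ge>M. \<forall>n\<ge>M. hnorm (ZZ N) (hsub (ZZ N) (s m) (s n)) < e"
    by auto
  have complim: "\<exists>l\<in>VV. (\<lambda>n. hnorm H (hsub H (s n j) l)) \<longlonglongrightarrow> 0" if j: "j < N" for j
  proof -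
    have "(\<forall>n. s n j \<in> VV) \<and> (\<forall>e>0. \<exists>M. \<forall>m\<ge>M. \<forall>n\<ge>M. hnorm H (hsub H (s m j) (s n j)) < e)"
    proof (intro conjI allI impI)
      fix n show "s n j \<in> VV" using Zvec_comp[OF sZ j] .
    next
      fix e :: real assume e: "e > 0"
      obtain M where M: "\<forall>m\<ge>M. \<forall>n\<ge>M. hnorm (ZZ N) (hsub (ZZ N) (s m) (s n)) < e" using cau e by blast
      have "hnorm H (hsub H (s m j) (s n j)) < e" if "m \<ge> M" "n \<ge> M" for m n
      proof -
        have "hnorm H (hsub (ZZ N) (s m) (s n) j) \<le> hnorm (ZZ N) (hsub (ZZ N) (s m) (s n))"
          by (rule Z_comp_le[OF _ j]) (rule Z_hsub_in[OF sZ sZ])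
        moreover have "hsub (ZZ N) (s m) (s n) j = hsub H (s m j) (s n j)" using Z_hsub[OF sZ sZ] j by simp
        moreover have "hnorm (ZZ N) (hsub (ZZ N) (s m) (s n)) < e" using M that by blast
        ultimately show ?thesis by simp
      qed
      then show "\<exists>M. \<forall>m\<ge>M. \<forall>n\<ge>M. hnorm H (hsub H (s m j) (s n j)) < e" by blast
    qed
    then show ?thesis by (rule hil[unfolded hilbert_space_def, THEN conjunct2, rule_format])
  qed
  then have "\<forall>j. \<exists>l. j < N \<longrightarrow> l \<in> VV \<and> (\<lambda>n. hnorm H (hsub H (s n j) l)) \<longlonglongrightarrow> 0"
    by blast
  from choice[OF this] have "\<exists>L. \<forall>j. j < N \<longrightarrow> L j \<in> VV \<and> (\<lambda>n. hnorm H (hsub H (s n j) (L j))) \<longlonglongrightarrow> 0" .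
  then obtain L where L: "\<And>j. j < N \<Longrightarrow> L j \<in> VV" and Lt: "\<And>j. j < N \<Longrightarrow> (\<lambda>n. hnorm H (hsub H (s n j) (L j))) \<longlonglongrightarrow> 0"
    by blast
  define x where "x = (\<lambda>j. if j < N then L j else z0)"
  have x: "x \<in> hvecs (ZZ N)" unfolding Zvec x_def using L by auto
  have eq: "hnorm (ZZ N) (hsub (ZZ N) (s n) x) = sqrt (\<Sum>j<N. (hnorm H (hsub H (s n j) (L j)))^2)" for n
  proof -
    have m: "hsub (ZZ N) (s n) x \<in> hvecs (ZZ N)" by (rule Z_hsub_in[OF sZ x])
    have "hnorm (ZZ N) (hsub (ZZ N) (s n) x) = sqrt (\<Sum>j<N. (hnorm H (hsub (ZZ N) (s n) x j))^2)"
      by (rule Z_hnorm[OF m])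
    also have "(\<Sum>j<N. (hnorm H (hsub (ZZ N) (s n) x j))^2) = (\<Sum>j<N. (hnorm H (hsub H (s n j) (L j)))^2)"
    proof (rule sum.cong)
      fix j assume "j \<in> {..<N}"
      then have "hsub (ZZ N) (s n) x j = hsub H (s n j) (L j)" unfolding Z_hsub[OF sZ x] by (simp add: x_def)
      then show "(hnorm H (hsub (ZZ N) (s n) x j))^2 = (hnorm H (hsub H (s n j) (L j)))^2" by simp
    qed simp
    finally show ?thesis .
  qed
  have "(\<lambda>n. sqrt (\<Sum>j<N. (hnorm H (hsub H (s n j) (L j)))^2)) \<longlonglongrightarrow> sqrt (\<Sum>j<N. 0^2)"
    by (intro tendsto_intros Lt) auto
  then have "(\<lambda>n. hnorm (ZZ N) (hsub (ZZ N) (s n) x)) \<longlonglongrightarrow> 0" unfolding eq by simp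
  then show "\<exists>x\<in>hvecs (ZZ N). (\<lambda>n. hnorm (ZZ N) (hsub (ZZ N) (s n) x)) \<longlonglongrightarrow> 0" using x by blast
qed

lemma Z_sep: assumes sep: "separable_hspace H" and N: "N > 0" shows "separable_hspace (ZZ N)"
proof -
  obtain D where D: "D \<subseteq> VV" "countable D" and dense: "\<forall>x\<in>VV. \<forall>e>0. \<exists>d\<in>D. hnorm H (hsub H x d) < e"
    using sep unfolding separable_hspace_def by blast
  define f where "f = (\<lambda>l j. if j < N then l ! j else z0)"
  define DZ where "DZ = f ` {l \<in> lists D. length l = N}"
  have cDZ: "countable DZ" unfolding DZ_def
    by (intro countable_image countable_subset[OF _ countable_lists[OF D(2)]]) auto
  have fl: "f l \<in> hvecs (ZZ N)" if "l \<in> lists D" "length l = N" for l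
  proof -
    have "l ! j \<in> VV" if "j < N" for j using that \<open>l \<in> lists D\<close> \<open>length l = N\<close> D(1) nth_mem by fastforce
    then show ?thesis unfolding Zvec f_def by auto
  qed
  have sDZ: "DZ \<subseteq> hvecs (ZZ N)" unfolding DZ_def using fl by blast
  have "\<exists>d\<in>DZ. hnorm (ZZ N) (hsub (ZZ N) x d) < e" if x: "x \<in> hvecs (ZZ N)" and e: "e > 0" for x e
  proof -
    define e' where "e' = e / sqrt N"
    have e': "e' > 0" unfolding e'_def using e N by simp
    have "\<forall>j<N. \<exists>d\<in>D. hnorm H (hsub H (x j) d) < e'" using dense Zvec_comp[OF x] e' by blast
    then have "\<forall>j. \<exists>d. j < N \<longrightarrow> d \<in> D \<and> hnorm H (hsub H (x j) d) < e'" by blast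
    from choice[OF this] obtain g where g: "\<And>j. j < N \<Longrightarrow> g j \<in> D \<and> hnorm H (hsub H (x j) (g j)) < e'" by blast
    define l where "l = map g [0..<N]"
    have l: "l \<in> {l \<in> lists D. length l = N}" unfolding l_def using g by auto
    define d where "d = f l"
    have dD: "d \<in> DZ" unfolding d_def DZ_def using l by blast
    have dZ: "d \<in> hvecs (ZZ N)" using dD sDZ by blast
    have dj: "j < N \<Longrightarrow> d j = g j" for j unfolding d_def f_def l_def by simp
    have m: "hsub (ZZ N) x d \<in> hvecs (ZZ N)" by (rule Z_hsub_in[OF x dZ])
    have "(\<Sum>j<N. (hnorm H (hsub H (x j) (g j)))^2) < (\<Sum>j<N. e'^2)"
    proof (rule sum_strict_mono)
      fix j assume "j \<in> {..<N}"
      then have j: "j < N" by simp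
      have "0 \<le> hnorm H (hsub H (x j) (g j))" using g[OF j] D(1) Zvec_comp[OF x j] by (intro hnorm_nonneg) auto
      then show "(hnorm H (hsub H (x j) (g j)))^2 < e'^2" using g[OF j] by (intro power_strict_mono) auto
    qed (use N in auto)
    also have "\<dots> = e^2" unfolding e'_def using N by (simp add: power_divide)
    finally have "sqrt (\<Sum>j<N. (hnorm H (hsub H (x j) (g j)))^2) < sqrt (e^2)" by (rule real_sqrt_less_mono)
    moreover have "hnorm (ZZ N) (hsub (ZZ N) x d) = sqrt (\<Sum>j<N. (hnorm H (hsub (ZZ N) x d j))^2)"
      by (rule Z_hnorm[OF m])
    moreover have "(\<Sum>j<N. (hnorm H (hsub (ZZ N) x d j))^2) = (\<Sum>j<N. (hnorm H (hsub H (x j) (g j)))^2)"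
      by (rule sum.cong) (auto simp: Z_hsub[OF x dZ] dj)
    ultimately have "hnorm (ZZ N) (hsub (ZZ N) x d) < e" using e by simp
    then show ?thesis using dD by blast
  qed
  then show ?thesis unfolding separable_hspace_def using cDZ sDZ by blast
qed

end



lemma rootsum:
  fixes k :: int and N :: nat
  assumes kN: "\<bar>k\<bar> < int N"
  shows "(\<Sum>j<N. cis (2*pi*real j*of_int k/real N)) = (if k = 0 then of_nat N else 0)"
proof (cases "k = 0")
  case True then show ?thesis by simp
next
  case False
  have Npos: "N > 0" using kN by linarith
  define \<zeta> where "\<zeta> = cis (2*pi*of_int k/real N)"
  have pw: "cis (2*pi*real j*of_int k/real N) = \<zeta>^j" for j
    unfolding \<zeta>_def DeMoivre by (simp add: algebra_simps)
  have ne: "\<zeta> \<noteq> 1"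
  proof
    assume "\<zeta> = 1"
    then have "cos (2*pi*of_int k/real N) = 1" unfolding \<zeta>_def by (metis Re_complex_of_real cis.sel(1) of_real_1)
    then obtain n :: int where n: "2*pi*of_int k/real N = of_int n * 2 * pi" using cos_one_2pi_int by blast
    then have "real_of_int k = of_int n * real N" using Npos by (simp add: field_simps)
    then have kk: "k = n * int N" by (metis of_int_eq_iff of_int_mult of_int_of_nat_eq)
    then have "n \<noteq> 0" using False by simp
    then have "\<bar>n * int N\<bar> \<ge> int N" by (simp add: abs_mult mult_le_cancel_right1 Npos)
    then show False using kN kk by simp
  qed
  have pN: "\<zeta>^N = 1"
  proof -
    have "\<zeta>^N = cis (2*pi*of_int k)" unfolding \<zeta>_def DeMoivre using Npos by (simp add: field_simps)
    also have "\<dots> = 1" by (simp add: cis_multiple_2pi)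
    finally show ?thesis .
  qed
  have "(\<Sum>j<N. cis (2*pi*real j*of_int k/real N)) = (\<Sum>j<N. \<zeta>^j)" by (simp add: pw)
  also have "\<dots> = 0" using geometric_sum[OF ne, of N] pN by simp
  finally show ?thesis using False by simp
qed

definition cf :: "nat \<Rightarrow> nat \<Rightarrow> nat \<Rightarrow> nat \<Rightarrow> complex" where
  "cf N M j i = complex_of_real (1 / sqrt (real N * real M)) * cis (-(2*pi*real j*real i/real N))"

lemma cf_prod:
  assumes "N > 0" "M > 0"
  shows "cnj (cf N M j i) * cf N M j i' =
    complex_of_real (1 / (real N * real M)) * cis (2*pi*real j*of_int (int i - int i')/real N)"
proof -
  have r: "1 / sqrt (real N * real M) * (1 / sqrt (real N * real M)) = 1 / (real N * real M)"
  proof -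
    have s: "sqrt (real N * real M) * sqrt (real N * real M) = real N * real M" by (simp only: real_sqrt_mult_self) simp
    show ?thesis unfolding times_divide_times_eq mult_1 s ..
  qed
  have a: "2*pi*real j*real i/real N + -(2*pi*real j*real i'/real N) = 2*pi*real j*of_int (int i - int i')/real N"
    by (simp add: diff_divide_distrib algebra_simps)
  have "cnj (cf N M j i) * cf N M j i' = complex_of_real (1 / sqrt (real N * real M) * (1 / sqrt (real N * real M)))
     * (cis (2*pi*real j*real i/real N) * cis (-(2*pi*real j*real i'/real N)))"
    unfolding cf_def complex_cnj_mult complex_cnj_complex_of_real cis_cnj minus_minus of_real_mult by (simp only: mult_ac)
  also have "\<dots> = complex_of_real (1 / (real N * real M)) * cis (2*pi*real j*of_int (int i - int i')/real N)"
    unfolding r cis_mult a ..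
  finally show ?thesis .
qed

lemma shiftK: assumes shift: "\<And>i i'. K (Suc i) (Suc i') = K i i'" shows "K (i + a) (i + b) = K a b"
  by (induction i) (auto simp: shift)

lemma S1:
  fixes K :: "nat \<Rightarrow> nat \<Rightarrow> complex"
  assumes MN: "M < N" and M: "0 < M" and shift: "\<And>i i'. K (Suc i) (Suc i') = K i i'"
  shows "(\<Sum>j<N. \<Sum>i<M. \<Sum>i'<M. cnj (cf N M j i) * cf N M j i' * K i i') = K 0 0"
proof -
  have N: "N > 0" using MN by simp
  have "(\<Sum>j<N. \<Sum>i<M. \<Sum>i'<M. cnj (cf N M j i) * cf N M j i' * K i i')
      = (\<Sum>i<M. \<Sum>j<N. \<Sum>i'<M. cnj (cf N M j i) * cf N M j i' * K i i')" by (rule sum.swap)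
  also have "\<dots> = (\<Sum>i<M. \<Sum>i'<M. \<Sum>j<N. cnj (cf N M j i) * cf N M j i' * K i i')"
    by (rule sum.cong[OF refl], rule sum.swap)
  also have "\<dots> = (\<Sum>i<M. \<Sum>i'<M. (if i = i' then K i i' / of_nat M else 0))"
  proof (intro sum.cong[OF refl])
    fix i i' assume i: "i \<in> {..<M}" and i': "i' \<in> {..<M}"
    have k: "\<bar>int i - int i'\<bar> < int N" using i i' MN by auto
    have "(\<Sum>j<N. cnj (cf N M j i) * cf N M j i' * K i i')
       = complex_of_real (1 / (real N * real M)) * K i i' * (\<Sum>j<N. cis (2*pi*real j*of_int (int i - int i')/real N))"
      unfolding sum_distrib_left cf_prod[OF N M] by (simp add: mult_ac)
    also have "\<dots> = (if i = i' then K i i' / of_nat M else 0)"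
      unfolding rootsum[OF k] using N by (simp add: field_simps)
    finally show "(\<Sum>j<N. cnj (cf N M j i) * cf N M j i' * K i i') = (if i = i' then K i i' / of_nat M else 0)" .
  qed
  also have "\<dots> = (\<Sum>i<M. K i i / of_nat M)"
    by (rule sum.cong[OF refl]) (simp add: sum.delta')
  also have "\<dots> = (\<Sum>i<M. K 0 0 / of_nat M)"
  proof (rule sum.cong[OF refl])
    fix i show "K i i / of_nat M = K 0 0 / of_nat M" using shiftK[of K, OF shift, of i 0 0] by simp
  qed
  also have "\<dots> = of_nat M * (K 0 0 / of_nat M)" by simp
  also have "\<dots> = K 0 0" using M by simp
  finally show ?thesis .
qed

lemma S2:
  fixes K :: "nat \<Rightarrow> nat \<Rightarrow> complex" and r :: real
  assumes MN: "M < N" and M: "0 < M" and shift: "\<And>i i'. K (Suc i) (Suc i') = K i i'"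
  shows "(\<Sum>j<N. complex_of_real r * cis (2*pi*real j/real N) * (\<Sum>i<M. \<Sum>i'<M. cnj (cf N M j i) * cf N M j i' * K i i'))
     = complex_of_real (r * (real M - 1) / real M) * K 0 1"
proof -
  have N: "N > 0" using MN by simp
  have "(\<Sum>j<N. complex_of_real r * cis (2*pi*real j/real N) * (\<Sum>i<M. \<Sum>i'<M. cnj (cf N M j i) * cf N M j i' * K i i'))
      = (\<Sum>j<N. \<Sum>i<M. \<Sum>i'<M. complex_of_real r * cis (2*pi*real j/real N) * cnj (cf N M j i) * cf N M j i' * K i i')"
    by (simp add: sum_distrib_left mult_ac)
  also have "\<dots> = (\<Sum>i<M. \<Sum>j<N. \<Sum>i'<M. complex_of_real r * cis (2*pi*real j/real N) * cnj (cf N M j i) * cf N M j i' * K i i')" by (rule sum.swap)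
  also have "\<dots> = (\<Sum>i<M. \<Sum>i'<M. \<Sum>j<N. complex_of_real r * cis (2*pi*real j/real N) * cnj (cf N M j i) * cf N M j i' * K i i')"
    by (rule sum.cong[OF refl], rule sum.swap)
  also have "\<dots> = (\<Sum>i<M. \<Sum>i'<M. (if i' = Suc i then complex_of_real (r / real M) * K i i' else 0))"
  proof (intro sum.cong[OF refl])
    fix i i' assume i: "i \<in> {..<M}" and i': "i' \<in> {..<M}"
    have k: "\<bar>1 + int i - int i'\<bar> < int N" using i i' MN by auto
    have e: "cis (2*pi*real j/real N) * cis (2*pi*real j*of_int (int i - int i')/real N)
        = cis (2*pi*real j*of_int (1 + int i - int i')/real N)" for j
      unfolding cis_mult by (rule arg_cong[where f=cis]) (simp add: add_divide_distrib diff_divide_distrib algebra_simps)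
    have "(\<Sum>j<N. complex_of_real r * cis (2*pi*real j/real N) * cnj (cf N M j i) * cf N M j i' * K i i')
       = (\<Sum>j<N. complex_of_real (r / (real N * real M)) * K i i' * (cis (2*pi*real j/real N) * cis (2*pi*real j*of_int (int i - int i')/real N)))"
    proof (rule sum.cong[OF refl])
      fix j
      have "complex_of_real r * cis (2*pi*real j/real N) * cnj (cf N M j i) * cf N M j i' * K i i'
        = complex_of_real r * cis (2*pi*real j/real N) * (cnj (cf N M j i) * cf N M j i') * K i i'"
        by (simp only: mult.assoc)
      also have "\<dots> = complex_of_real (r / (real N * real M)) * K i i' * (cis (2*pi*real j/real N) * cis (2*pi*real j*of_int (int i - int i')/real N))"
        unfolding cf_prod[OF N M] by (simp add: mult_ac)
      finally show "complex_of_real r * cis (2*pi*real j/real N) * cnj (cf N M j i) * cf N M j i' * K i i'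
        = complex_of_real (r / (real N * real M)) * K i i' * (cis (2*pi*real j/real N) * cis (2*pi*real j*of_int (int i - int i')/real N))" .
    qed
    also have "\<dots> = complex_of_real (r / (real N * real M)) * K i i' * (\<Sum>j<N. cis (2*pi*real j*of_int (1 + int i - int i')/real N))"
      unfolding e by (simp add: sum_distrib_left)
    also have "\<dots> = (if i' = Suc i then complex_of_real (r / real M) * K i i' else 0)"
      unfolding rootsum[OF k] using N by auto
    finally show "(\<Sum>j<N. complex_of_real r * cis (2*pi*real j/real N) * cnj (cf N M j i) * cf N M j i' * K i i')
      = (if i' = Suc i then complex_of_real (r / real M) * K i i' else 0)" .
  qed
  also have "\<dots> = (\<Sum>i<M. if Suc i < M then complex_of_real (r / real M) * K 0 1 else 0)"
  proof (rule sum.cong[OF refl])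
    fix i assume "i \<in> {..<M}"
    have "K i (Suc i) = K 0 1" using shiftK[of K, OF shift, of i 0 1] by simp
    then show "(\<Sum>i'<M. (if i' = Suc i then complex_of_real (r / real M) * K i i' else 0))
        = (if Suc i < M then complex_of_real (r / real M) * K 0 1 else 0)"
      by (simp add: sum.delta)
  qed
  also have "\<dots> = (\<Sum>i\<in>{..<M-1}. complex_of_real (r / real M) * K 0 1)"
  proof -
    have set: "{..<M} \<inter> {i. Suc i < M} = {..<M-1}" by auto
    show ?thesis by (simp add: sum.If_cases set)
  qed
  also have "\<dots> = complex_of_real (r * (real M - 1) / real M) * K 0 1"
    using M by (simp add: of_nat_diff field_simps)
  finally show ?thesis .
qed




locale uctx = cips H for H :: "'a hspace" +
  fixes U S :: "'a \<Rightarrow> 'a" and M :: nat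
  assumes U_in: "x \<in> hvecs H \<Longrightarrow> U x \<in> hvecs H"
    and U_add: "x \<in> hvecs H \<Longrightarrow> y \<in> hvecs H \<Longrightarrow> U (hadd H x y) = hadd H (U x) (U y)"
    and U_scale: "x \<in> hvecs H \<Longrightarrow> U (hscale H c x) = hscale H c (U x)"
    and S_in: "x \<in> hvecs H \<Longrightarrow> S x \<in> hvecs H"
    and adj: "x \<in> hvecs H \<Longrightarrow> y \<in> hvecs H \<Longrightarrow> hinner H (U x) y = hinner H x (S y)"
    and SU: "x \<in> hvecs H \<Longrightarrow> S (U x) = x"
    and M2: "2 \<le> M"
begin

abbreviation "NN \<equiv> Suc M"

lemma Upow_in[simp]: "x \<in> VV \<Longrightarrow> (U^^i) x \<in> VV"
  by (induction i) (auto simp: U_in)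
lemma Spow_in[simp]: "x \<in> VV \<Longrightarrow> (S^^i) x \<in> VV"
  by (induction i) (auto simp: S_in)

lemma adj_pow: "x \<in> VV \<Longrightarrow> y \<in> VV \<Longrightarrow> ip ((U^^i) x) y = ip x ((S^^i) y)"
proof (induction i arbitrary: y)
  case 0 then show ?case by simp
next
  case (Suc i)
  have "ip ((U^^Suc i) x) y = ip (U ((U^^i) x)) y" by simp
  also have "\<dots> = ip ((U^^i) x) (S y)" using Suc.prems by (simp add: adj)
  also have "\<dots> = ip x ((S^^i) (S y))" using Suc.IH[of "S y"] Suc.prems S_in by simp
  also have "\<dots> = ip x ((S^^Suc i) y)" by (simp add: funpow_Suc_right del: funpow.simps)
  finally show ?case .
qed

lemma UU: "x \<in> VV \<Longrightarrow> y \<in> VV \<Longrightarrow> ip (U x) (U y) = ip x y"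
  by (simp add: adj U_in SU)

lemma Kshift: "z \<in> VV \<Longrightarrow> y \<in> VV \<Longrightarrow> ip ((U^^Suc i) z) ((U^^Suc i') y) = ip ((U^^i) z) ((U^^i') y)"
  by (simp add: UU)

lemma Upow_add: "x \<in> VV \<Longrightarrow> y \<in> VV \<Longrightarrow> (U^^i) (ad x y) = ad ((U^^i) x) ((U^^i) y)"
  by (induction i) (auto simp: U_add)
lemma Upow_scale: "x \<in> VV \<Longrightarrow> (U^^i) (sc c x) = sc c ((U^^i) x)"
  by (induction i) (auto simp: U_scale)

definition "Vj j y = hsumn H (\<lambda>i. sc (cf NN M j i) ((U^^i) y)) M"
definition "Vop y = (\<lambda>j. if j < NN then Vj j y else z0)"
definition "Vja j w = hsumn H (\<lambda>i. sc (cnj (cf NN M j i)) ((S^^i) w)) M"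
definition "Vadj x = hsumn H (\<lambda>j. Vja j (x j)) NN"
definition "rr = real M / (real M - 1)"
definition "cc j = complex_of_real rr * cis (2*pi*real j/real NN)"
definition "Dop x = (\<lambda>j. if j < NN then sc (cc j) (x j) else z0)"

lemma Vj_in[simp]: "y \<in> VV \<Longrightarrow> Vj j y \<in> VV" unfolding Vj_def by simp
lemma Vja_in[simp]: "w \<in> VV \<Longrightarrow> Vja j w \<in> VV" unfolding Vja_def by simp
lemma Vop_in: "y \<in> VV \<Longrightarrow> Vop y \<in> hvecs (ZZ NN)" unfolding Vop_def Zvec by simp
lemma Vadj_in: "x \<in> hvecs (ZZ NN) \<Longrightarrow> Vadj x \<in> VV" unfolding Vadj_def by (simp add: Zvec)
lemma Dop_in: "x \<in> hvecs (ZZ NN) \<Longrightarrow> Dop x \<in> hvecs (ZZ NN)" unfolding Dop_def Zvec by simp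

lemma inner_Vj_left: "y \<in> VV \<Longrightarrow> w \<in> VV \<Longrightarrow> ip (Vj j y) w = (\<Sum>i<M. cnj (cf NN M j i) * ip ((U^^i) y) w)"
  unfolding Vj_def by (simp add: inner_hsumn_left)
lemma inner_Vj_right: "y \<in> VV \<Longrightarrow> w \<in> VV \<Longrightarrow> ip w (Vj j y) = (\<Sum>i<M. cf NN M j i * ip w ((U^^i) y))"
  unfolding Vj_def by (simp add: inner_hsumn_right)

lemma inner_Vj_Vj: assumes z: "z \<in> VV" and y: "y \<in> VV"
  shows "ip (Vj j z) (Vj j y) = (\<Sum>i<M. \<Sum>i'<M. cnj (cf NN M j i) * cf NN M j i' * ip ((U^^i) z) ((U^^i') y))"
  using z y by (simp add: inner_Vj_left inner_Vj_right sum_distrib_left mult_ac) (rule sum.swap)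

lemma inner_Vj_adj: assumes y: "y \<in> VV" and w: "w \<in> VV"
  shows "ip (Vj j y) w = ip y (Vja j w)"
  using y w unfolding Vja_def by (simp add: inner_Vj_left inner_hsumn_right adj_pow)

lemma Z_inner_Vop: assumes z: "z \<in> VV" and x: "x \<in> hvecs (ZZ NN)"
  shows "hinner (ZZ NN) (Vop z) x = (\<Sum>j<NN. ip (Vj j z) (x j))"
  unfolding Zsp_simps Vop_def by simp

lemma is_adj: assumes y: "y \<in> VV" and x: "x \<in> hvecs (ZZ NN)"
  shows "hinner (ZZ NN) (Vop y) x = ip y (Vadj x)"
proof -
  have "hinner (ZZ NN) (Vop y) x = (\<Sum>j<NN. ip (Vj j y) (x j))" by (rule Z_inner_Vop[OF y x])
  also have "\<dots> = (\<Sum>j<NN. ip y (Vja j (x j)))"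
    by (rule sum.cong[OF refl]) (use x y in \<open>simp add: Zvec inner_Vj_adj\<close>)
  also have "\<dots> = ip y (Vadj x)" unfolding Vadj_def using x y by (simp add: inner_hsumn_right Zvec)
  finally show ?thesis .
qed

lemma K_shift_fun: assumes z: "z \<in> VV" and y: "y \<in> VV"
  shows "(\<lambda>i i'. ip ((U^^i) z) ((U^^i') y)) (Suc i) (Suc i') = (\<lambda>i i'. ip ((U^^i) z) ((U^^i') y)) i i'"
  using Kshift[OF z y] by simp

lemma Vop_iso_inner: assumes z: "z \<in> VV" and y: "y \<in> VV"
  shows "hinner (ZZ NN) (Vop z) (Vop y) = ip z y"
proof -
  have "hinner (ZZ NN) (Vop z) (Vop y) = (\<Sum>j<NN. ip (Vj j z) (Vop y j))" by (rule Z_inner_Vop[OF z Vop_in[OF y]])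
  also have "\<dots> = (\<Sum>j<NN. \<Sum>i<M. \<Sum>i'<M. cnj (cf NN M j i) * cf NN M j i' * ip ((U^^i) z) ((U^^i') y))"
    by (rule sum.cong[OF refl]) (simp add: Vop_def inner_Vj_Vj z y)
  also have "\<dots> = ip ((U^^0) z) ((U^^0) y)"
    using S1[of M NN "\<lambda>i i'. ip ((U^^i) z) ((U^^i') y)"] M2 Kshift[OF z y] by simp
  finally show ?thesis by simp
qed

lemma rr_eq: "complex_of_real (rr * (real M - 1) / real M) = 1"
  using M2 unfolding rr_def by simp

lemma Vop_D_inner: assumes z: "z \<in> VV" and y: "y \<in> VV"
  shows "hinner (ZZ NN) (Vop z) (Dop (Vop y)) = ip z (U y)"
proof -
  have "hinner (ZZ NN) (Vop z) (Dop (Vop y)) = (\<Sum>j<NN. ip (Vj j z) (Dop (Vop y) j))"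
    by (rule Z_inner_Vop[OF z Dop_in[OF Vop_in[OF y]]])
  also have "\<dots> = (\<Sum>j<NN. complex_of_real rr * cis (2*pi*real j/real NN) *
       (\<Sum>i<M. \<Sum>i'<M. cnj (cf NN M j i) * cf NN M j i' * ip ((U^^i) z) ((U^^i') y)))"
    by (rule sum.cong[OF refl]) (simp add: Dop_def Vop_def inner_Vj_Vj z y cc_def)
  also have "\<dots> = complex_of_real (rr * (real M - 1) / real M) * ip ((U^^0) z) ((U^^1) y)"
    using S2[of M NN "\<lambda>i i'. ip ((U^^i) z) ((U^^i') y)" rr] M2 Kshift[OF z y] by simp
  finally show ?thesis unfolding rr_eq by simp
qed

lemma final_eq: assumes y: "y \<in> VV" shows "Vadj (Dop (Vop y)) = U y"
proof (rule eq_by_inner)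
  show "Vadj (Dop (Vop y)) \<in> VV" by (rule Vadj_in[OF Dop_in[OF Vop_in[OF y]]])
  show "U y \<in> VV" by (rule U_in[OF y])
  fix z assume z: "z \<in> VV"
  have "ip z (Vadj (Dop (Vop y))) = hinner (ZZ NN) (Vop z) (Dop (Vop y))"
    using is_adj[OF z Dop_in[OF Vop_in[OF y]]] by simp
  also have "\<dots> = ip z (U y)" by (rule Vop_D_inner[OF z y])
  finally show "ip z (Vadj (Dop (Vop y))) = ip z (U y)" .
qed

end



context cips begin
lemma scale_z0[simp]: "sc c z0 = z0"
  by (rule eq_by_inner) auto

lemma hnorm_scale: assumes x: "x \<in> VV" shows "hnorm H (sc c x) = cmod c * hnorm H x"
proof -
  have "ip (sc c x) (sc c x) = (cnj c * c) * ip x x" using x by simp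
  also have "\<dots> = complex_of_real ((cmod c)^2 * Re (ip x x))"
    using inner_cor[OF x] by (metis complex_norm_square mult.commute of_real_mult)
  finally have "Re (ip (sc c x) (sc c x)) = (cmod c)^2 * Re (ip x x)" by simp
  then show ?thesis unfolding hnorm_def by (simp add: real_sqrt_mult)
qed
end

context uctx begin

lemma Vj_add: "x \<in> VV \<Longrightarrow> y \<in> VV \<Longrightarrow> Vj j (ad x y) = ad (Vj j x) (Vj j y)"
  by (rule eq_by_inner) (simp_all add: inner_Vj_right Upow_add sum.distrib distrib_left)

lemma Vj_scale: "x \<in> VV \<Longrightarrow> Vj j (sc c x) = sc c (Vj j x)"
  by (rule eq_by_inner) (simp_all add: inner_Vj_right Upow_scale sum_distrib_left mult_ac)

lemma Vop_norm: "y \<in> VV \<Longrightarrow> hnorm (ZZ NN) (Vop y) = hnorm H y"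
  unfolding hnorm_def by (simp add: Vop_iso_inner)

lemma Vop_iso: "isometry H (ZZ NN) Vop"
  unfolding isometry_def bounded_linear_op_def
proof (intro conjI ballI allI)
  fix x assume "x \<in> VV" then show "Vop x \<in> hvecs (ZZ NN)" by (rule Vop_in)
next
  fix x y assume "x \<in> VV" "y \<in> VV"
  then show "Vop (ad x y) = hadd (ZZ NN) (Vop x) (Vop y)"
    by (auto simp: Zsp_simps Vop_def Vj_add)
next
  fix c x assume "x \<in> VV"
  then show "Vop (sc c x) = hscale (ZZ NN) c (Vop x)"
    by (auto simp: Zsp_simps Vop_def Vj_scale)
next
  show "\<exists>K. \<forall>x\<in>VV. hnorm (ZZ NN) (Vop x) \<le> K * hnorm H x"
    by (rule exI[of _ 1]) (simp add: Vop_norm)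
next
  fix x assume "x \<in> VV" then show "hnorm (ZZ NN) (Vop x) = hnorm H x" by (rule Vop_norm)
qed

lemma Vop_adj: "is_adjoint H (ZZ NN) Vop Vadj"
  unfolding is_adjoint_def using Vadj_in is_adj by blast

lemma rr_pos: "rr \<ge> 0" unfolding rr_def using M2 by simp

lemma cc_norm: "cmod (cc j) = rr" unfolding cc_def using rr_pos by (simp add: norm_mult)

lemma Dop_norm: assumes x: "x \<in> hvecs (ZZ NN)" shows "hnorm (ZZ NN) (Dop x) = rr * hnorm (ZZ NN) x"
proof -
  have "hnorm (ZZ NN) (Dop x) = sqrt (\<Sum>j<NN. (hnorm H (Dop x j))^2)" by (rule Z_hnorm[OF Dop_in[OF x]])
  also have "(\<Sum>j<NN. (hnorm H (Dop x j))^2) = (\<Sum>j<NN. rr^2 * (hnorm H (x j))^2)"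
    by (rule sum.cong[OF refl]) (use x in \<open>simp add: Dop_def hnorm_scale Zvec cc_norm power_mult_distrib\<close>)
  also have "sqrt \<dots> = rr * sqrt (\<Sum>j<NN. (hnorm H (x j))^2)"
    by (simp add: sum_distrib_left[symmetric] real_sqrt_mult rr_pos)
  finally show ?thesis using Z_hnorm[OF x] by simp
qed

lemma Dop_blo: "bounded_linear_op (ZZ NN) (ZZ NN) Dop"
  unfolding bounded_linear_op_def
proof (intro conjI ballI allI)
  fix x assume "x \<in> hvecs (ZZ NN)" then show "Dop x \<in> hvecs (ZZ NN)" by (rule Dop_in)
next
  fix x y assume "x \<in> hvecs (ZZ NN)" "y \<in> hvecs (ZZ NN)"
  then show "Dop (hadd (ZZ NN) x y) = hadd (ZZ NN) (Dop x) (Dop y)"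
    by (auto simp: Zsp_simps Dop_def scale_add_right Zvec)
next
  fix c x assume "x \<in> hvecs (ZZ NN)"
  then show "Dop (hscale (ZZ NN) c x) = hscale (ZZ NN) c (Dop x)"
    by (auto simp: Zsp_simps Dop_def Zvec mult.commute)
next
  show "\<exists>K. \<forall>x\<in>hvecs (ZZ NN). hnorm (ZZ NN) (Dop x) \<le> K * hnorm (ZZ NN) x"
    by (rule exI[of _ rr]) (simp add: Dop_norm)
qed

definition "ej j b = (\<lambda>k. if k = j then b else z0)"

lemma Dop_diag: "diagonal (ZZ NN) Dop"
proof -
  obtain B where B: "orthonormal_basis H B" using exists_onb by blast
  have BV: "B \<subseteq> VV" and B1: "\<And>b. b \<in> B \<Longrightarrow> ip b b = 1"
    and B2: "\<And>b b'. b \<in> B \<Longrightarrow> b' \<in> B \<Longrightarrow> b \<noteq> b' \<Longrightarrow> ip b b' = 0"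
    and B3: "\<And>x. x \<in> VV \<Longrightarrow> (\<forall>b\<in>B. ip b x = 0) \<Longrightarrow> x = z0"
    using B unfolding orthonormal_basis_def by auto
  have Bnz: "b \<noteq> z0" if "b \<in> B" for b using B1[OF that] by auto
  define BZ where "BZ = {ej j b | j b. j < NN \<and> b \<in> B}"
  have ejZ: "ej j b \<in> hvecs (ZZ NN)" if "j < NN" "b \<in> VV" for j b
    using that unfolding ej_def Zvec by auto
  have ip_ej: "hinner (ZZ NN) (ej j b) x = ip b (x j)" if "j < NN" "b \<in> VV" "x \<in> hvecs (ZZ NN)" for j b x
  proof -
    have "hinner (ZZ NN) (ej j b) x = (\<Sum>k<NN. if k = j then ip b (x k) else 0)"
      unfolding Zsp_simps ej_def by (rule sum.cong[OF refl]) (use that in \<open>auto simp: Zvec\<close>)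
    also have "\<dots> = ip b (x j)" using that by (simp add: sum.delta)
    finally show ?thesis .
  qed
  have onb: "orthonormal_basis (ZZ NN) BZ" unfolding orthonormal_basis_def
  proof (intro conjI ballI impI)
    show "BZ \<subseteq> hvecs (ZZ NN)" unfolding BZ_def using ejZ BV by blast
  next
    fix v assume "v \<in> BZ"
    then obtain j b where v: "v = ej j b" "j < NN" "b \<in> B" unfolding BZ_def by blast
    then show "hinner (ZZ NN) v v = 1" using ip_ej[OF v(2) _ ejZ[OF v(2)]] BV B1 by (auto simp: ej_def)
  next
    fix v v' assume "v \<in> BZ" "v' \<in> BZ" "v \<noteq> v'"
    then obtain j b j' b' where v: "v = ej j b" "j < NN" "b \<in> B" and v': "v' = ej j' b'" "j' < NN" "b' \<in> B"
      and ne: "ej j b \<noteq> ej j' b'" unfolding BZ_def by blast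
    have "hinner (ZZ NN) v v' = ip b (ej j' b' j)" using ip_ej[OF v(2) _ ejZ[OF v'(2)]] BV v v' by auto
    also have "\<dots> = 0"
    proof (cases "j = j'")
      case True
      then have "b \<noteq> b'" using ne by auto
      then show ?thesis using True B2 v v' by (simp add: ej_def)
    next
      case False
      then show ?thesis using BV v by (auto simp: ej_def)
    qed
    finally show "hinner (ZZ NN) v v' = 0" .
  next
    fix x assume x: "x \<in> hvecs (ZZ NN)" and orth: "\<forall>v\<in>BZ. hinner (ZZ NN) v x = 0"
    have "x j = z0" if j: "j < NN" for j
    proof (rule B3)
      show "x j \<in> VV" using x j by (simp add: Zvec)
      show "\<forall>b\<in>B. ip b (x j) = 0"
      proof
        fix b assume b: "b \<in> B"
        have "ej j b \<in> BZ" unfolding BZ_def using j b by blast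
        then have "hinner (ZZ NN) (ej j b) x = 0" using orth by blast
        moreover have "b \<in> VV" using BV b by blast
        ultimately show "ip b (x j) = 0" using ip_ej[OF j _ x] by simp
      qed
    qed
    then show "x = hzero (ZZ NN)" unfolding Zsp_simps using x by (intro ext) (metis Zvec_out)
  qed
  have eig: "eigenvector (ZZ NN) Dop v" if "v \<in> BZ" for v
  proof -
    obtain j b where v: "v = ej j b" "j < NN" "b \<in> B" using \<open>v \<in> BZ\<close> unfolding BZ_def by blast
    have "Dop v = hscale (ZZ NN) (cc j) v" unfolding v(1) by (auto simp: Dop_def ej_def Zsp_simps)
    moreover have "v \<noteq> hzero (ZZ NN)"
    proof
      assume "v = hzero (ZZ NN)"
      then have "v j = z0" by (simp add: Zsp_simps)
      then show False using v Bnz by (simp add: ej_def)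
    qed
    moreover have "v \<in> hvecs (ZZ NN)" using v ejZ BV by blast
    ultimately show ?thesis unfolding eigenvector_def by blast
  qed
  show ?thesis unfolding diagonal_def using Dop_blo onb eig by blast
qed

end



definition tr :: "'a hspace \<Rightarrow> ('a \<Rightarrow> 'b) \<Rightarrow> 'b hspace" where
  "tr Z f = \<lparr>hvecs = f ` hvecs Z,
     hadd = (\<lambda>x y. f (hadd Z (inv_into (hvecs Z) f x) (inv_into (hvecs Z) f y))),
     hscale = (\<lambda>c x. f (hscale Z c (inv_into (hvecs Z) f x))),
     hzero = f (hzero Z),
     hinner = (\<lambda>x y. hinner Z (inv_into (hvecs Z) f x) (inv_into (hvecs Z) f y))\<rparr>"

locale trctx = cips Z for Z :: "'a hspace" +
  fixes f :: "'a \<Rightarrow> 'b"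
  assumes inj: "inj_on f (hvecs Z)"
begin

abbreviation "T \<equiv> tr Z f"
abbreviation "g \<equiv> inv_into (hvecs Z) f"

lemma gf[simp]: "x \<in> hvecs Z \<Longrightarrow> g (f x) = x" by (rule inv_into_f_f[OF inj])

lemma T_vecs: "hvecs T = f ` hvecs Z" by (simp add: tr_def)
lemma T_add[simp]: "x \<in> hvecs Z \<Longrightarrow> y \<in> hvecs Z \<Longrightarrow> hadd T (f x) (f y) = f (hadd Z x y)" by (simp add: tr_def)
lemma T_scale[simp]: "x \<in> hvecs Z \<Longrightarrow> hscale T c (f x) = f (hscale Z c x)" by (simp add: tr_def)
lemma T_zero: "hzero T = f (hzero Z)" by (simp add: tr_def)
lemma T_inner[simp]: "x \<in> hvecs Z \<Longrightarrow> y \<in> hvecs Z \<Longrightarrow> hinner T (f x) (f y) = hinner Z x y" by (simp add: tr_def)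
lemma T_sub[simp]: "x \<in> hvecs Z \<Longrightarrow> y \<in> hvecs Z \<Longrightarrow> hsub T (f x) (f y) = f (hsub Z x y)" by (simp add: hsub_def)
lemma T_norm[simp]: "x \<in> hvecs Z \<Longrightarrow> hnorm T (f x) = hnorm Z x" by (simp add: hnorm_def)
lemma T_in[simp]: "x \<in> hvecs Z \<Longrightarrow> f x \<in> hvecs T" by (simp add: T_vecs)
lemma T_cases: "x' \<in> hvecs T \<Longrightarrow> (\<And>x. x \<in> hvecs Z \<Longrightarrow> x' = f x \<Longrightarrow> P) \<Longrightarrow> P" by (auto simp: T_vecs)
lemma T_ball: "(\<forall>x'\<in>hvecs T. P x') \<longleftrightarrow> (\<forall>x\<in>hvecs Z. P (f x))" by (simp add: T_vecs)
lemma f_eq[simp]: "x \<in> hvecs Z \<Longrightarrow> y \<in> hvecs Z \<Longrightarrow> f x = f y \<longleftrightarrow> x = y" using inj by (auto dest: inj_onD)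

lemma T_inv: "x \<in> VV \<Longrightarrow> \<exists>y\<in>hvecs T. hadd T (f x) y = f z0"
proof -
  assume x: "x \<in> VV"
  have "hadd T (f x) (f (sc (-1) x)) = f z0" using x by (simp add: add_neg)
  moreover have "f (sc (-1) x) \<in> hvecs T" using x by simp
  ultimately show ?thesis by blast
qed

lemma T_cips: "complex_inner_product_space T"
  unfolding complex_inner_product_space_def T_ball
  apply (intro conjI)
  apply (simp_all add: T_zero scale_add_left scale_add_right inner_nonneg T_inv)
  apply (simp_all add: add_assoc)
  apply (auto intro: add_comm inner_sym inner_eq0)
  done


lemma g_in: "x' \<in> hvecs T \<Longrightarrow> g x' \<in> VV" by (simp add: T_vecs inv_into_into)
lemma fg: "x' \<in> hvecs T \<Longrightarrow> f (g x') = x'" by (simp add: T_vecs f_inv_into_f)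

lemma T_hilbert: assumes hil: "hilbert_space Z" shows "hilbert_space T"
  unfolding hilbert_space_def
proof (intro conjI allI impI)
  show "complex_inner_product_space T" by (rule T_cips)
  fix s :: "nat \<Rightarrow> 'b"
  assume a: "(\<forall>n. s n \<in> hvecs T) \<and> (\<forall>e>0. \<exists>N. \<forall>m\<ge>N. \<forall>n\<ge>N. hnorm T (hsub T (s m) (s n)) < e)"
  define t where "t = (\<lambda>n. g (s n))"
  have t: "t n \<in> VV" for n using a g_in unfolding t_def by blast
  have st: "s n = f (t n)" for n using a fg unfolding t_def by metis
  have "(\<forall>n. t n \<in> VV) \<and> (\<forall>e>0. \<exists>N. \<forall>m\<ge>N. \<forall>n\<ge>N. hnorm Z (hsub Z (t m) (t n)) < e)"
    using a t unfolding st by simp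
  then obtain x where x: "x \<in> VV" and lim: "(\<lambda>n. hnorm Z (hsub Z (t n) x)) \<longlonglongrightarrow> 0"
    using hil[unfolded hilbert_space_def, THEN conjunct2, rule_format] by blast
  have "(\<lambda>n. hnorm T (hsub T (s n) (f x))) \<longlonglongrightarrow> 0" unfolding st using lim t x by simp
  then show "\<exists>x\<in>hvecs T. (\<lambda>n. hnorm T (hsub T (s n) x)) \<longlonglongrightarrow> 0" using x by auto
qed

lemma T_sep: assumes sep: "separable_hspace Z" shows "separable_hspace T"
proof -
  obtain D where D: "D \<subseteq> VV" "countable D" and dense: "\<forall>x\<in>VV. \<forall>e>0. \<exists>d\<in>D. hnorm Z (hsub Z x d) < e"
    using sep unfolding separable_hspace_def by blast
  have "f ` D \<subseteq> hvecs T" using D by (auto simp: T_vecs)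
  moreover have "countable (f ` D)" using D by simp
  moreover have "\<forall>x\<in>hvecs T. \<forall>e>0. \<exists>d\<in>f ` D. hnorm T (hsub T x d) < e"
    unfolding T_ball
  proof (intro ballI allI impI)
    fix x e assume x: "x \<in> VV" and e: "(e::real) > 0"
    then obtain d where d: "d \<in> D" "hnorm Z (hsub Z x d) < e" using dense by blast
    then have "d \<in> VV" using D by blast
    then have "hnorm T (hsub T (f x) (f d)) < e" using d x by simp
    then show "\<exists>d\<in>f ` D. hnorm T (hsub T (f x) d) < e" using d by blast
  qed
  ultimately show ?thesis unfolding separable_hspace_def by blast
qed

lemma T_package:
  fixes Y :: "'y hspace"
  assumes hil: "hilbert_space Z" and sep: "separable_hspace Z" and diag: "diagonal Z D"
    and bnd: "\<forall>x\<in>hvecs Z. hnorm Z (D x) \<le> c * hnorm Z x"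
    and iso: "isometry Y Z V" and adjV: "is_adjoint Y Z V Vadj"
    and fin: "\<forall>y\<in>hvecs Y. Vadj (D (V y)) = U y"
  shows "hilbert_space T \<and> separable_hspace T \<and> diagonal T (f \<circ> D \<circ> g) \<and>
     (\<forall>x\<in>hvecs T. hnorm T ((f \<circ> D \<circ> g) x) \<le> c * hnorm T x) \<and>
     isometry Y T (f \<circ> V) \<and> is_adjoint Y T (f \<circ> V) (Vadj \<circ> g) \<and>
     (\<forall>y\<in>hvecs Y. (Vadj \<circ> g) ((f \<circ> D \<circ> g) ((f \<circ> V) y)) = U y)"
proof -
  have Dblo: "bounded_linear_op Z Z D" and
    ex: "\<exists>B. orthonormal_basis Z B \<and> (\<forall>b\<in>B. eigenvector Z D b)"
    using diag unfolding diagonal_def by auto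
  have Din: "\<And>x. x \<in> VV \<Longrightarrow> D x \<in> VV"
    and Dadd: "\<And>x y. x \<in> VV \<Longrightarrow> y \<in> VV \<Longrightarrow> D (ad x y) = ad (D x) (D y)"
    and Dsc: "\<And>c x. x \<in> VV \<Longrightarrow> D (sc c x) = sc c (D x)"
    and DK: "\<exists>K. \<forall>x\<in>VV. hnorm Z (D x) \<le> K * hnorm Z x"
    using Dblo unfolding bounded_linear_op_def by auto
  obtain B where onb: "orthonormal_basis Z B" and eig: "\<forall>b\<in>B. eigenvector Z D b" using ex by blast
  have BV: "B \<subseteq> VV" and B1: "\<forall>b\<in>B. ip b b = 1" and B2: "\<forall>b\<in>B. \<forall>b'\<in>B. b \<noteq> b' \<longrightarrow> ip b b' = 0"
    and B3: "\<forall>x\<in>VV. (\<forall>b\<in>B. ip b x = 0) \<longrightarrow> x = z0"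
    using onb unfolding orthonormal_basis_def by auto
  have blo: "bounded_linear_op T T (f \<circ> D \<circ> g)"
    unfolding bounded_linear_op_def T_ball
  proof (intro conjI ballI allI)
    fix x assume "x \<in> VV" then show "(f \<circ> D \<circ> g) (f x) \<in> hvecs T" by (simp add: Din)
  next
    fix x y assume "x \<in> VV" "y \<in> VV"
    then show "(f \<circ> D \<circ> g) (hadd T (f x) (f y)) = hadd T ((f \<circ> D \<circ> g) (f x)) ((f \<circ> D \<circ> g) (f y))"
      by (simp add: Din Dadd)
  next
    fix c x assume "x \<in> VV"
    then show "(f \<circ> D \<circ> g) (hscale T c (f x)) = hscale T c ((f \<circ> D \<circ> g) (f x))"
      by (simp add: Din Dsc)
  next
    show "\<exists>K. \<forall>x\<in>VV. hnorm T ((f \<circ> D \<circ> g) (f x)) \<le> K * hnorm T (f x)"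
      using DK by (simp add: Din)
  qed
  have onbT: "orthonormal_basis T (f ` B)" unfolding orthonormal_basis_def
  proof (intro conjI)
    show "f ` B \<subseteq> hvecs T" using BV by (auto simp: T_vecs)
    show "\<forall>b\<in>f ` B. hinner T b b = 1" using BV B1 by auto
    show "\<forall>b\<in>f ` B. \<forall>b'\<in>f ` B. b \<noteq> b' \<longrightarrow> hinner T b b' = 0" using BV B2 by (auto simp: subset_iff)
    show "\<forall>x\<in>hvecs T. (\<forall>b\<in>f ` B. hinner T b x = 0) \<longrightarrow> x = hzero T"
      unfolding T_ball using BV B3 by (auto simp: T_zero subset_iff)
  qed
  have eigT: "\<forall>b\<in>f ` B. eigenvector T (f \<circ> D \<circ> g) b"
  proof
    fix b' assume "b' \<in> f ` B"
    then obtain b where b: "b \<in> B" "b' = f b" by blast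
    have bV: "b \<in> VV" using b BV by blast
    obtain c where "D b = sc c b" "b \<noteq> z0" using eig b unfolding eigenvector_def by blast
    then show "eigenvector T (f \<circ> D \<circ> g) b'" unfolding eigenvector_def b(2) using bV
      by (auto simp: T_zero)
  qed
  have isoT: "isometry Y T (f \<circ> V)"
  proof -
    have Vin: "\<And>x. x \<in> hvecs Y \<Longrightarrow> V x \<in> VV"
      and Vadd: "\<And>x y. x \<in> hvecs Y \<Longrightarrow> y \<in> hvecs Y \<Longrightarrow> V (hadd Y x y) = ad (V x) (V y)"
      and Vsc: "\<And>c x. x \<in> hvecs Y \<Longrightarrow> V (hscale Y c x) = sc c (V x)"
      and VK: "\<exists>K. \<forall>x\<in>hvecs Y. hnorm Z (V x) \<le> K * hnorm Y x"
      and Vn: "\<And>x. x \<in> hvecs Y \<Longrightarrow> hnorm Z (V x) = hnorm Y x"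
      using iso unfolding isometry_def bounded_linear_op_def by blast+
    show ?thesis unfolding isometry_def bounded_linear_op_def
      using Vin Vadd Vsc VK Vn by simp
  qed
  have adjT: "is_adjoint Y T (f \<circ> V) (Vadj \<circ> g)"
  proof -
    have Vin: "\<And>x. x \<in> hvecs Y \<Longrightarrow> V x \<in> VV" using iso unfolding isometry_def bounded_linear_op_def by auto
    have a1: "\<And>y. y \<in> VV \<Longrightarrow> Vadj y \<in> hvecs Y" and a2: "\<And>x y. x \<in> hvecs Y \<Longrightarrow> y \<in> VV \<Longrightarrow> ip (V x) y = hinner Y x (Vadj y)"
      using adjV unfolding is_adjoint_def by auto
    show ?thesis unfolding is_adjoint_def T_ball using a1 a2 Vin by simp
  qed
  have finT: "\<forall>y\<in>hvecs Y. (Vadj \<circ> g) ((f \<circ> D \<circ> g) ((f \<circ> V) y)) = U y"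
  proof
    fix y assume y: "y \<in> hvecs Y"
    have "V y \<in> VV" using iso y unfolding isometry_def bounded_linear_op_def by auto
    then show "(Vadj \<circ> g) ((f \<circ> D \<circ> g) ((f \<circ> V) y)) = U y" using fin y Din by simp
  qed
  have bndT: "\<forall>x\<in>hvecs T. hnorm T ((f \<circ> D \<circ> g) x) \<le> c * hnorm T x"
    unfolding T_ball using bnd Din by simp
  show ?thesis using T_hilbert[OF hil] T_sep[OF sep] blo onbT eigT bndT isoT adjT finT
    unfolding diagonal_def by blast
qed

end



theorem proposition4p8:
  fixes Y :: "'y hspace" and U :: "'y \<Rightarrow> 'y" and \<epsilon> :: real
  assumes "hilbert_space Y" and "separable_hspace Y" and "infinite_dimensional Y"
    and "unitary Y U" and "\<epsilon> > 0"
  shows "\<exists>(X :: (nat \<Rightarrow> complex) hspace) (D :: (nat \<Rightarrow> complex) \<Rightarrow> (nat \<Rightarrow> complex))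
            (V :: 'y \<Rightarrow> (nat \<Rightarrow> complex)) (Vadj :: (nat \<Rightarrow> complex) \<Rightarrow> 'y).
           hilbert_space X \<and> separable_hspace X \<and>
           diagonal X D \<and> (\<forall>x\<in>hvecs X. hnorm X (D x) \<le> (1 + \<epsilon>) * hnorm X x) \<and>
           isometry Y X V \<and> is_adjoint Y X V Vadj \<and>
           (\<forall>y\<in>hvecs Y. Vadj (D (V y)) = U y)"
proof -
  note hil = assms(1) and sep = assms(2) and un = assms(4) and eps = assms(5)
  have cY: "cips Y" using hil unfolding hilbert_space_def cips_def by blast
  have Ublo: "bounded_linear_op Y Y U" using un unfolding unitary_def by blast
  obtain S where Sadj: "is_adjoint Y Y U S" and SUinv: "\<forall>x\<in>hvecs Y. S (U x) = x \<and> U (S x) = x"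
    using un unfolding unitary_def by blast
  define M where "M = nat \<lceil>1/\<epsilon>\<rceil> + 2"
  have M2: "2 \<le> M" unfolding M_def by simp
  interpret u: uctx Y U S M
  proof (rule uctx.intro[OF cY], unfold_locales)
    fix x assume x: "x \<in> hvecs Y"
    show "U x \<in> hvecs Y" using Ublo x unfolding bounded_linear_op_def by blast
    show "S x \<in> hvecs Y" using Sadj x unfolding is_adjoint_def by blast
    show "S (U x) = x" using SUinv x by blast
    fix c show "U (hscale Y c x) = hscale Y c (U x)" using Ublo x unfolding bounded_linear_op_def by blast
  next
    fix x y assume x: "x \<in> hvecs Y" and y: "y \<in> hvecs Y"
    show "U (hadd Y x y) = hadd Y (U x) (U y)" using Ublo x y unfolding bounded_linear_op_def by blast
    show "hinner Y (U x) y = hinner Y x (S y)" using Sadj x y unfolding is_adjoint_def by blast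
  next
    show "2 \<le> M" by (rule M2)
  qed
  have rr_le: "u.rr \<le> 1 + \<epsilon>"
  proof -
    have c: "real_of_int \<lceil>1/\<epsilon>\<rceil> \<ge> 1/\<epsilon>" by (rule le_of_int_ceiling)
    have "1/\<epsilon> > 0" using eps by simp
    then have "real M = real_of_int \<lceil>1/\<epsilon>\<rceil> + 2" unfolding M_def by simp
    then have "real M - 1 \<ge> 1/\<epsilon>" using c by linarith
    then have e1: "\<epsilon> * (real M - 1) \<ge> 1" using eps by (simp add: field_simps)
    have pos: "real M - 1 > 0" using M2 by simp
    show ?thesis unfolding u.rr_def using e1 pos by (simp add: field_simps)
  qed
  define Z where "Z = Zsp Y (Suc M)"
  have Zhil: "hilbert_space Z" unfolding Z_def by (rule u.Z_hilbert[OF hil])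
  have Zsep: "separable_hspace Z" unfolding Z_def by (rule u.Z_sep[OF sep]) simp
  have Zdiag: "diagonal Z u.Dop" unfolding Z_def by (rule u.Dop_diag)
  have Zbnd: "\<forall>x\<in>hvecs Z. hnorm Z (u.Dop x) \<le> (1 + \<epsilon>) * hnorm Z x"
  proof
    fix x assume x: "x \<in> hvecs Z"
    have "hnorm Z (u.Dop x) = u.rr * hnorm Z x" unfolding Z_def by (rule u.Dop_norm[OF x[unfolded Z_def]])
    also have "\<dots> \<le> (1 + \<epsilon>) * hnorm Z x"
      using rr_le u.hnorm_nonneg cips.hnorm_nonneg[OF u.Zc x[unfolded Z_def]] unfolding Z_def
      by (intro mult_right_mono) auto
    finally show "hnorm Z (u.Dop x) \<le> (1 + \<epsilon>) * hnorm Z x" .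
  qed
  have Ziso: "isometry Y Z u.Vop" unfolding Z_def by (rule u.Vop_iso)
  have Zadj: "is_adjoint Y Z u.Vop u.Vadj" unfolding Z_def by (rule u.Vop_adj)
  have Zfin: "\<forall>y\<in>hvecs Y. u.Vadj (u.Dop (u.Vop y)) = U y" using u.final_eq by blast
  obtain \<iota> :: "'y \<Rightarrow> nat \<Rightarrow> complex" where \<iota>: "inj_on \<iota> (hvecs Y)" using u.sep_inj[OF sep] by blast
  define f where "f = (\<lambda>(x :: nat \<Rightarrow> 'y) (n :: nat). \<iota> (x (n mod Suc M)) (n div Suc M))"
  have finj: "inj_on f (hvecs Z)"
  proof (rule inj_onI)
    fix x x' assume x: "x \<in> hvecs Z" and x': "x' \<in> hvecs Z" and eq: "f x = f x'"
    show "x = x'"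
    proof
      fix j show "x j = x' j"
      proof (cases "j < Suc M")
        case True
        have "\<iota> (x j) k = \<iota> (x' j) k" for k
        proof -
          have "f x (k * Suc M + j) = f x' (k * Suc M + j)" using eq by simp
          moreover have "(k * Suc M + j) mod Suc M = j" using True by (simp only: mod_mult_self3 mod_less)
          moreover have "(k * Suc M + j) div Suc M = k"
          proof -
            have "(k * Suc M + j) div Suc M = k + j div Suc M" by (rule div_mult_self3) simp
            then show ?thesis using div_less[OF True] by simp
          qed
          ultimately show ?thesis unfolding f_def by simp
        qed
        then have "\<iota> (x j) = \<iota> (x' j)" by blast
        moreover have "x j \<in> hvecs Y" "x' j \<in> hvecs Y" using x x' True unfolding Z_def by (simp_all add: u.Zvec)
        ultimately show ?thesis using \<iota> by (auto dest: inj_onD)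
      next
        case False
        then show ?thesis using x x' unfolding Z_def by (simp add: u.Zvec)
      qed
    qed
  qed
  interpret t: trctx Z f
    by (rule trctx.intro[OF u.Zc[of "Suc M", folded Z_def]]) (unfold_locales, rule finj)
  from t.T_package[OF Zhil Zsep Zdiag Zbnd Ziso Zadj Zfin]
  show ?thesis by blast
qed


end
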